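(* Let $s\geq 3$, let $p,q$ be coprime integers, and let $k\in G_{K_s}(p,q)$ be any element with $M=k^q$ and $L=k^{-p}$. Then $$k^{p-(4s+7)q}=l^{-1}c^{-1}l^{-s}c^{-1}l^{-s}c^{-1}l^{-1}.$$
   Context: Let $R=c\,l\,c\,l^{-1}c^{-1}l^{-s}c^{-1}l^{-1}c\,l\,c\,l^{s-1}$, $M=c$ and $L=c^{-(2s-2)}\,l\,c\,l^{s}\,c\,l^{s}\,c\,l\,c^{-(2s+9)}$. Define $G_{K_s}(p,q)=\langle c,l\mid R,\ M^pL^q\rangle$ (the fundamental group of $p/q$ surgery on the $(-2,3,2s+1)$-pretzel knot). *)

theory Defs
  imports Main
begin

text \<open>A letter is a generator together with a sign (True = positive, False = inverse).
  Equality in the presented group <c,l | Rs> is the smallest congruence on words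
  generated by free cancellation and by deleting relators (normal closure).\<close>

datatype gen = GenC | GenL

type_synonym word = "(gen \<times> bool) list"

definition inv_word :: "word \<Rightarrow> word" where
  "inv_word w = rev (map (\<lambda>(g, b). (g, \<not> b)) w)"

definition wpow :: "word \<Rightarrow> int \<Rightarrow> word" where
  "wpow w n = (if 0 \<le> n then concat (replicate (nat n) w)
               else concat (replicate (nat (- n)) (inv_word w)))"

inductive pres_eq :: "word set \<Rightarrow> word \<Rightarrow> word \<Rightarrow> bool" for Rs :: "word set" where
  refl: "pres_eq Rs w w"
| sym: "pres_eq Rs u w \<Longrightarrow> pres_eq Rs w u"
| trans: "pres_eq Rs u v \<Longrightarrow> pres_eq Rs v w \<Longrightarrow> pres_eq Rs u w"
| cancel: "pres_eq Rs (u @ [(g, b), (g, \<not> b)] @ v) (u @ v)"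
| relator: "r \<in> Rs \<Longrightarrow> pres_eq Rs (u @ r @ v) (u @ v)"

definition gc :: word where "gc = [(GenC, True)]"
definition gl :: word where "gl = [(GenL, True)]"

definition relR :: "nat \<Rightarrow> word" where
  "relR s = gc @ gl @ gc @ wpow gl (-1) @ wpow gc (-1) @ wpow gl (- int s) @ wpow gc (-1)
            @ wpow gl (-1) @ gc @ gl @ gc @ wpow gl (int s - 1)"

definition wordM :: word where "wordM = gc"

definition wordL :: "nat \<Rightarrow> word" where
  "wordL s = wpow gc (- (2 * int s - 2)) @ gl @ gc @ wpow gl (int s) @ gc @ wpow gl (int s)
             @ gc @ gl @ wpow gc (- (2 * int s + 9))"

definition GK_rels :: "nat \<Rightarrow> int \<Rightarrow> int \<Rightarrow> word set" where
  "GK_rels s p q = {relR s, wpow wordM p @ wpow (wordL s) q}"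

definition GK_eq :: "nat \<Rightarrow> int \<Rightarrow> int \<Rightarrow> word \<Rightarrow> word \<Rightarrow> bool" where
  "GK_eq s p q = pres_eq (GK_rels s p q)"

end

theory Submission
  imports Defs
begin

lemma pe_ctx: "pres_eq Rs u v \<Longrightarrow> pres_eq Rs (x@u@y) (x@v@y)"
proof (induction rule: pres_eq.induct)
  case (refl w) then show ?case by (rule pres_eq.refl)
next
  case (sym u w) then show ?case by (blast intro: pres_eq.sym)
next
  case (trans u v w) then show ?case by (blast intro: pres_eq.trans)
next
  case (cancel u g b v)
  have "pres_eq Rs ((x@u) @ [(g, b), (g, \<not> b)] @ (v@y)) ((x@u) @ (v@y))" by (rule pres_eq.cancel)
  then show ?case by simp
next
  case (relator r u v)
  have "pres_eq Rs ((x@u) @ r @ (v@y)) ((x@u) @ (v@y))" using relator by (rule pres_eq.relator)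
  then show ?case by simp
qed

lemma pe_app: "pres_eq Rs u u' \<Longrightarrow> pres_eq Rs v v' \<Longrightarrow> pres_eq Rs (u@v) (u'@v')"
proof -
  assume a: "pres_eq Rs u u'" and b: "pres_eq Rs v v'"
  have "pres_eq Rs ([]@u@v) ([]@u'@v)" using pe_ctx[OF a] by blast
  moreover have "pres_eq Rs (u'@v@[]) (u'@v'@[])" using pe_ctx[OF b] by blast
  ultimately show ?thesis using pres_eq.trans by fastforce
qed

lemma inv_word_append[simp]: "inv_word (u@v) = inv_word v @ inv_word u"
  by (simp add: inv_word_def)
lemma inv_word_inv[simp]: "inv_word (inv_word u) = u"
  by (induction u) (auto simp: inv_word_def)
lemma inv_word_Nil[simp]: "inv_word [] = []" by (simp add: inv_word_def)
lemma cr: "concat (replicate n x) @ x = x @ concat (replicate n x)"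
  by (induction n) auto
lemma inv_word_concat_rep[simp]: "inv_word (concat (replicate n w)) = concat (replicate n (inv_word w))"
  by (induction n) (auto simp: cr)

lemma inv_word_wpow[simp]: "inv_word (wpow w n) = wpow w (-n)"
  by (auto simp: wpow_def)

lemma cancel_r: "pres_eq Rs (w @ inv_word w) []"
proof (induction w)
  case Nil then show ?case by (simp add: pres_eq.refl)
next
  case (Cons a w)
  obtain g b where ab: "a = (g,b)" by force
  have "pres_eq Rs ([(g,b)] @ (w @ inv_word w) @ [(g, \<not> b)]) ([(g,b)] @ [] @ [(g, \<not> b)])"
    using pe_ctx[OF Cons] by blast
  moreover have "pres_eq Rs ([] @ [(g, b), (g, \<not> b)] @ []) ([]@[])" by (rule pres_eq.cancel)
  ultimately show ?case using ab by (auto simp: inv_word_def intro: pres_eq.trans)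
qed

lemma cancel_l: "pres_eq Rs (inv_word w @ w) []"
  using cancel_r[of Rs "inv_word w"] by simp

lemma pe_inv: "pres_eq Rs u v \<Longrightarrow> pres_eq Rs (inv_word u) (inv_word v)"
proof -
  assume a: "pres_eq Rs u v"
  have 1: "pres_eq Rs (inv_word u @ (v @ inv_word v)) (inv_word u @ [])"
    using pe_app[OF pres_eq.refl cancel_r] by blast
  have 2: "pres_eq Rs (inv_word u @ v @ inv_word v) (inv_word u @ u @ inv_word v)"
    using pe_ctx[OF pres_eq.sym[OF a], of "inv_word u" "inv_word v"] by simp
  have 3: "pres_eq Rs ((inv_word u @ u) @ inv_word v) ([] @ inv_word v)"
    using pe_app[OF cancel_l pres_eq.refl] by blast
  show ?thesis using 1 2 3
    by (metis append_Nil append_Nil2 append_assoc pres_eq.sym pres_eq.trans)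
qed

lemma wpow_succ: "pres_eq Rs (wpow w (a+1)) (wpow w a @ w)"
proof (cases "a \<ge> 0")
  case True
  have "nat (a+1) = Suc (nat a)" using True by simp
  then show ?thesis using True
    by (simp add: wpow_def replicate_append_same[symmetric] pres_eq.refl del: replicate_append_same)
next
  case False
  define n where "n = nat (-a-1)"
  have na: "nat (-a) = Suc n" using False n_def by simp
  have e1: "wpow w a = wpow w (a+1) @ inv_word w"
  proof (cases "a + 1 = 0")
    case True then show ?thesis using na n_def by (simp add: wpow_def)
  next
    case F: False
    then have "nat (-(a+1)) = n" using n_def by simp
    then show ?thesis using False F na
      by (simp add: wpow_def replicate_append_same[symmetric] del: replicate_append_same)
  qed
  have "pres_eq Rs (wpow w (a+1) @ (inv_word w @ w)) (wpow w (a+1) @ [])"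
    using pe_app[OF pres_eq.refl cancel_l] by blast
  then show ?thesis using e1 by (simp add: pres_eq.sym)
qed

lemma wpow_pred: "pres_eq Rs (wpow w (a-1)) (wpow w a @ inv_word w)"
proof -
  have "pres_eq Rs (wpow w a @ inv_word w) ((wpow w (a-1) @ w) @ inv_word w)"
    using pe_app[OF wpow_succ[of Rs w "a-1"] pres_eq.refl] by simp
  moreover have "pres_eq Rs (wpow w (a-1) @ (w @ inv_word w)) (wpow w (a-1) @ [])"
    using pe_app[OF pres_eq.refl cancel_r] by blast
  ultimately show ?thesis by (auto intro: pres_eq.sym pres_eq.trans)
qed

lemma wpow_0[simp]: "wpow w 0 = []" by (simp add: wpow_def)

lemma wpow_add: "pres_eq Rs (wpow w (a+b)) (wpow w a @ wpow w b)"
proof (induction b rule: int_induct[where k=0])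
  case base then show ?case by (simp add: pres_eq.refl)
next
  case (step1 b)
  have "pres_eq Rs (wpow w (a+b+1)) (wpow w (a+b) @ w)" by (rule wpow_succ)
  moreover have "pres_eq Rs (wpow w (a+b) @ w) ((wpow w a @ wpow w b) @ w)"
    using pe_app[OF step1.IH pres_eq.refl] .
  moreover have "pres_eq Rs (wpow w a @ (wpow w b @ w)) (wpow w a @ wpow w (b+1))"
    using pe_app[OF pres_eq.refl pres_eq.sym[OF wpow_succ]] .
  ultimately show ?case by (auto simp: add.assoc intro: pres_eq.trans)
next
  case (step2 b)
  have "pres_eq Rs (wpow w (a+b-1)) (wpow w (a+b) @ inv_word w)" by (rule wpow_pred)
  moreover have "pres_eq Rs (wpow w (a+b) @ inv_word w) ((wpow w a @ wpow w b) @ inv_word w)"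
    using pe_app[OF step2.IH pres_eq.refl] .
  moreover have "pres_eq Rs (wpow w a @ (wpow w b @ inv_word w)) (wpow w a @ wpow w (b-1))"
    using pe_app[OF pres_eq.refl pres_eq.sym[OF wpow_pred]] .
  ultimately show ?case by (auto simp: add_diff_eq intro: pres_eq.trans)
qed

lemma wpow_cong: "pres_eq Rs u v \<Longrightarrow> pres_eq Rs (wpow u n) (wpow v n)"
proof -
  assume a: "pres_eq Rs u v"
  have c: "pres_eq Rs (concat (replicate m x)) (concat (replicate m y))" if "pres_eq Rs x y" for m x y
    using that by (induction m) (auto intro: pe_app pres_eq.refl)
  show ?thesis using c[OF a] c[OF pe_inv[OF a]] by (simp add: wpow_def)
qed

lemma wpow_mult: "pres_eq Rs (wpow (wpow k q) n) (wpow k (q*n))"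
proof (induction n rule: int_induct[where k=0])
  case base then show ?case by (simp add: pres_eq.refl)
next
  case (step1 n)
  have "pres_eq Rs (wpow (wpow k q) (n+1)) (wpow (wpow k q) n @ wpow k q)" by (rule wpow_succ)
  moreover have "pres_eq Rs (wpow (wpow k q) n @ wpow k q) (wpow k (q*n) @ wpow k q)"
    using pe_app[OF step1.IH pres_eq.refl] .
  moreover have "pres_eq Rs (wpow k (q*n) @ wpow k q) (wpow k (q*(n+1)))"
    using pres_eq.sym[OF wpow_add[of Rs k "q*n" q]] by (simp add: distrib_left)
  ultimately show ?case by (auto intro: pres_eq.trans)
next
  case (step2 n)
  have "pres_eq Rs (wpow (wpow k q) (n-1)) (wpow (wpow k q) n @ inv_word (wpow k q))" by (rule wpow_pred)
  moreover have "pres_eq Rs (wpow (wpow k q) n @ inv_word (wpow k q)) (wpow k (q*n) @ wpow k (-q))"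
    using pe_app[OF step2.IH pres_eq.refl] by simp
  moreover have "pres_eq Rs (wpow k (q*n) @ wpow k (-q)) (wpow k (q*(n-1)))"
    using pres_eq.sym[OF wpow_add[of Rs k "q*n" "-q"]] by (simp add: right_diff_distrib)
  ultimately show ?case by (auto intro: pres_eq.trans)
qed

lemma invL: "inv_word (wordL s) = wpow gc (2 * int s + 9) @
           (wpow gl (-1) @ wpow gc (-1) @ wpow gl (- int s) @ wpow gc (-1)
            @ wpow gl (- int s) @ wpow gc (-1) @ wpow gl (-1)) @ wpow gc (2 * int s - 2)"
proof -
  have g: "inv_word gc = wpow gc (-1)" "inv_word gl = wpow gl (-1)"
    by (simp_all add: wpow_def)
  have g2: "gc = wpow gc 1" "gl = wpow gl 1" by (simp_all add: wpow_def)
  show ?thesis unfolding wordL_def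
    apply (simp only: inv_word_append inv_word_wpow g append_assoc)
    apply (simp add: add.commute)
    done
qed

theorem fact3p2:
  fixes s :: nat and p q :: int and k :: word
  assumes "s \<ge> 3"
    and "coprime p q"
    and "GK_eq s p q wordM (wpow k q)"
    and "GK_eq s p q (wordL s) (wpow k (- p))"
  shows "GK_eq s p q (wpow k (p - (4 * int s + 7) * q))
           (wpow gl (-1) @ wpow gc (-1) @ wpow gl (- int s) @ wpow gc (-1)
            @ wpow gl (- int s) @ wpow gc (-1) @ wpow gl (-1))"
proof -
  define Rs where "Rs = GK_rels s p q"
  define W where "W = wpow gl (-1) @ wpow gc (-1) @ wpow gl (- int s) @ wpow gc (-1)
            @ wpow gl (- int s) @ wpow gc (-1) @ wpow gl (-1)"
  define a where "a = 2 * int s + 9"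
  define b where "b = 2 * int s - 2"
  have M: "pres_eq Rs gc (wpow k q)" using assms(3) by (simp add: GK_eq_def Rs_def wordM_def)
  have L: "pres_eq Rs (wordL s) (wpow k (-p))" using assms(4) by (simp add: GK_eq_def Rs_def)
  have E: "p - (4 * int s + 7) * q = (q * (-a)) + (p + q * (-b))" by (simp add: a_def b_def algebra_simps)
  have s1: "pres_eq Rs (wpow k (p - (4 * int s + 7) * q)) (wpow k (q*(-a)) @ wpow k p @ wpow k (q*(-b)))"
    unfolding E using wpow_add pe_app pres_eq.refl pres_eq.trans by metis
  have ca: "pres_eq Rs (wpow k (q*(-a))) (wpow gc (-a))"
    using wpow_mult[of Rs k q "-a"] wpow_cong[OF M, of "-a"] by (meson pres_eq.sym pres_eq.trans)
  have cb: "pres_eq Rs (wpow k (q*(-b))) (wpow gc (-b))"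
    using wpow_mult[of Rs k q "-b"] wpow_cong[OF M, of "-b"] by (meson pres_eq.sym pres_eq.trans)
  have cp: "pres_eq Rs (wpow k p) (wpow gc a @ W @ wpow gc b)"
    using pe_inv[OF L] invL[of s] by (simp add: a_def b_def W_def pres_eq.sym)
  have s2: "pres_eq Rs (wpow k (p - (4 * int s + 7) * q)) (wpow gc (-a) @ (wpow gc a @ W @ wpow gc b) @ wpow gc (-b))"
    using s1 ca cb cp by (meson pe_app pres_eq.trans)
  have z1: "pres_eq Rs (wpow gc (-a) @ wpow gc a) []"
    using pres_eq.sym[OF wpow_add[of Rs gc "-a" a]] by simp
  have z2: "pres_eq Rs (wpow gc b @ wpow gc (-b)) []"
    using pres_eq.sym[OF wpow_add[of Rs gc b "-b"]] by simp
  have "pres_eq Rs ((wpow gc (-a) @ wpow gc a) @ W @ (wpow gc b @ wpow gc (-b))) ([] @ W @ [])"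
    using pe_app[OF z1 pe_app[OF pres_eq.refl z2]] .
  then have "pres_eq Rs (wpow gc (-a) @ (wpow gc a @ W @ wpow gc b) @ wpow gc (-b)) W" by simp
  with s2 show ?thesis unfolding GK_eq_def Rs_def[symmetric] W_def[symmetric] by (rule pres_eq.trans)
qed

end
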